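(* Let $(\Omega,\mathcal{F})$ be a measurable space, let $\mathrm{B}_b$ denote the space of all bounded real-valued $\mathcal{F}$-measurable functions on $\Omega$, and let $C\subset \mathrm{B}_b$ be a set with $0\in C$ and $X+m\in C$ for all $X\in C$ and $m\in\mathbb{R}$. A map $H\colon C\to\mathbb{R}$ is a premium principle if and only if there exist a risk measure $R\colon \mathrm{B}_b\to\mathbb{R}$ and a deviation measure $D\colon C\to\mathbb{R}$ such that $$H(X)=R(X)+D(X)\quad\text{for all }X\in C.$$
   Context: Constants are identified with constant functions, and $\le$ denotes the pointwise order on $\mathrm{B}_b$. A map $H\colon C\to\mathbb{R}$ is a premium principle if (P1) $H(X+m)=H(X)+m$ for all $X\in C$, $m\in\mathbb{R}$, and (P2) $H(0)=0$ and $H(X)\ge 0$ for all $X\in C$ with $X\ge 0$. A map $R\colon \mathrm{B}_b\to\mathbb{R}$ is a risk measure if $R(X+m)=R(X)+m$ for all $X\in\mathrm{B}_b$, $m\in\mathbb{R}$, and $R(0)=0$ and $R(X)\le R(Y)$ whenever $X\le Y$. A map $D\colon C\to\mathbb{R}$ is a deviation measure if $D(X+m)=D(X)$ for all $X\in C$, $m\in\mathbb{R}$, and $D(0)=0$ and $D(X)\ge 0$ for all $X\in C$. *)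

theory Defs
  imports "HOL-Analysis.Analysis" "HOL-Probability.Probability"
begin

text \<open>Bounded real-valued measurable functions on the measurable space M.
  Functions are total HOL functions; only their values on space M matter,
  pointwise order is taken on space M.\<close>
definition Bb :: "'a measure \<Rightarrow> ('a \<Rightarrow> real) set" where
  "Bb M = {X. X \<in> borel_measurable M \<and> bounded (X ` space M)}"

definition le_on :: "'a measure \<Rightarrow> ('a \<Rightarrow> real) \<Rightarrow> ('a \<Rightarrow> real) \<Rightarrow> bool" where
  "le_on M X Y \<longleftrightarrow> (\<forall>\<omega>\<in>space M. X \<omega> \<le> Y \<omega>)"

definition premium_principle ::
  "'a measure \<Rightarrow> ('a \<Rightarrow> real) set \<Rightarrow> (('a \<Rightarrow> real) \<Rightarrow> real) \<Rightarrow> bool" where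
  "premium_principle M C H \<longleftrightarrow>
     (\<forall>X\<in>C. \<forall>m::real. H (\<lambda>\<omega>. X \<omega> + m) = H X + m) \<and>
     H (\<lambda>_. 0) = 0 \<and>
     (\<forall>X\<in>C. le_on M (\<lambda>_. 0) X \<longrightarrow> H X \<ge> 0)"

definition risk_measure :: "'a measure \<Rightarrow> (('a \<Rightarrow> real) \<Rightarrow> real) \<Rightarrow> bool" where
  "risk_measure M R \<longleftrightarrow>
     (\<forall>X\<in>Bb M. \<forall>m::real. R (\<lambda>\<omega>. X \<omega> + m) = R X + m) \<and>
     R (\<lambda>_. 0) = 0 \<and>
     (\<forall>X\<in>Bb M. \<forall>Y\<in>Bb M. le_on M X Y \<longrightarrow> R X \<le> R Y)"

definition deviation_measure ::
  "'a measure \<Rightarrow> ('a \<Rightarrow> real) set \<Rightarrow> (('a \<Rightarrow> real) \<Rightarrow> real) \<Rightarrow> bool" where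
  "deviation_measure M C D \<longleftrightarrow>
     (\<forall>X\<in>C. \<forall>m::real. D (\<lambda>\<omega>. X \<omega> + m) = D X) \<and>
     D (\<lambda>_. 0) = 0 \<and>
     (\<forall>X\<in>C. D X \<ge> 0)"

end

theory Submission
  imports Defs
begin

lemma bdd_below_img: "X \<in> Bb M \<Longrightarrow> bdd_below (X ` space M)"
  unfolding Bb_def by (auto intro: bounded_imp_bdd_below)

definition Rinf :: "'a measure \<Rightarrow> ('a \<Rightarrow> real) \<Rightarrow> real" where
  "Rinf M X = (INF \<omega>\<in>space M. X \<omega>)"

lemma Rinf_add: assumes "X \<in> Bb M" "space M \<noteq> {}" shows "Rinf M (\<lambda>\<omega>. X \<omega> + m) = Rinf M X + m"
proof (cases "space M = {}")
  case False
  have b: "bdd_below (X ` space M)" using bdd_below_img[OF assms(1)] .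
  have "(INF \<omega>\<in>space M. X \<omega> + m) = (INF \<omega>\<in>space M. X \<omega>) + m"
  proof (rule antisym)
    show "(INF \<omega>\<in>space M. X \<omega>) + m \<le> (INF \<omega>\<in>space M. X \<omega> + m)"
    proof (rule cINF_greatest[OF False])
      fix x assume "x \<in> space M"
      then have "(INF \<omega>\<in>space M. X \<omega>) \<le> X x" using b by (simp add: cINF_lower)
      then show "(INF \<omega>\<in>space M. X \<omega>) + m \<le> X x + m" by simp
    qed
    have "(INF \<omega>\<in>space M. X \<omega>) \<ge> (INF \<omega>\<in>space M. X \<omega> + m) - m"
    proof (rule cINF_greatest[OF False])
      fix x assume "x \<in> space M"
      moreover have "bdd_below ((\<lambda>\<omega>. X \<omega> + m) ` space M)"
      proof -
        from b obtain c where c: "\<And>y. y \<in> space M \<Longrightarrow> c \<le> X y"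
          unfolding bdd_below_def by auto
        show ?thesis by (rule bdd_belowI2[where m="c + m"]) (simp add: c)
      qed
      ultimately have "(INF \<omega>\<in>space M. X \<omega> + m) \<le> X x + m"
        using cINF_lower[where f="\<lambda>\<omega>. X \<omega> + m"] by blast
      then show "(INF \<omega>\<in>space M. X \<omega> + m) - m \<le> X x" by simp
    qed
    then show "(INF \<omega>\<in>space M. X \<omega> + m) \<le> (INF \<omega>\<in>space M. X \<omega>) + m" by simp
  qed
  then show ?thesis using False by (simp add: Rinf_def)
qed (use assms in simp)

lemma Rinf_mono: assumes "X \<in> Bb M" "Y \<in> Bb M" "le_on M X Y" "space M \<noteq> {}" shows "Rinf M X \<le> Rinf M Y"
proof (cases "space M = {}")
  case False
  have "(INF \<omega>\<in>space M. X \<omega>) \<le> (INF \<omega>\<in>space M. Y \<omega>)"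
  proof (rule cINF_mono[OF False])
    fix y assume y: "y \<in> space M"
    show "\<exists>x\<in>space M. X x \<le> Y y" using y assms(3) unfolding le_on_def by blast
  qed (rule bdd_below_img[OF assms(1)])
  then show ?thesis using False by (simp add: Rinf_def)
qed (use assms in simp)

lemma Rinf_zero: "space M \<noteq> {} \<Longrightarrow> Rinf M (\<lambda>_. 0) = 0"
  by (simp add: Rinf_def)

lemma Rinf_risk: assumes ne: "space M \<noteq> {}" shows "risk_measure M (Rinf M)"
proof -
  have a: "\<forall>X\<in>Bb M. \<forall>m::real. Rinf M (\<lambda>\<omega>. X \<omega> + m) = Rinf M X + m"
    using Rinf_add[OF _ ne] by simp
  have b: "\<forall>X\<in>Bb M. \<forall>Y\<in>Bb M. le_on M X Y \<longrightarrow> Rinf M X \<le> Rinf M Y"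
    using Rinf_mono[OF _ _ _ ne] by simp
  show ?thesis unfolding risk_measure_def using a b Rinf_zero[OF ne] by (intro conjI)
qed

theorem theorem2p2:
  fixes M :: "'a measure" and C :: "('a \<Rightarrow> real) set" and H :: "('a \<Rightarrow> real) \<Rightarrow> real"
  assumes "C \<subseteq> Bb M"
    and "(\<lambda>_. 0) \<in> C"
    and "\<And>X m. X \<in> C \<Longrightarrow> (\<lambda>\<omega>. X \<omega> + m) \<in> C"
  shows "premium_principle M C H \<longleftrightarrow>
    (\<exists>R D. risk_measure M R \<and> deviation_measure M C D \<and> (\<forall>X\<in>C. H X = R X + D X))"
proof
  assume P: "premium_principle M C H"
  have P1: "\<And>X m. X \<in> C \<Longrightarrow> H (\<lambda>\<omega>. X \<omega> + m) = H X + m"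
    and P2: "H (\<lambda>_. 0) = 0" and P3: "\<And>X. X \<in> C \<Longrightarrow> le_on M (\<lambda>_. 0) X \<Longrightarrow> H X \<ge> 0"
    using P unfolding premium_principle_def by blast+
  have ne: "space M \<noteq> {}"
  proof
    assume e: "space M = {}"
    have c: "(\<lambda>\<omega>. 0 + (-1::real)) \<in> C" using assms(3)[OF assms(2)] by blast
    have "le_on M (\<lambda>_. 0) (\<lambda>\<omega>. 0 + (-1::real))" using e unfolding le_on_def by blast
    then have "H (\<lambda>\<omega>. 0 + (-1::real)) \<ge> 0" using P3[OF c] by blast
    moreover have "H (\<lambda>\<omega>. 0 + (-1::real)) = H (\<lambda>_. 0) + -1"
      using P1[OF assms(2)] by blast
    ultimately show False using P2 by linarith
  qed
  define D where "D X = H X - Rinf M X" for X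
  have "deviation_measure M C D"
    unfolding deviation_measure_def
  proof (intro conjI ballI allI)
    fix X m assume X: "X \<in> C"
    then have XB: "X \<in> Bb M" using assms(1) by blast
    have "H (\<lambda>\<omega>. X \<omega> + m) - Rinf M (\<lambda>\<omega>. X \<omega> + m) = H X - Rinf M X"
      using P1[OF X, of m] Rinf_add[OF XB ne, of m] by linarith
    then show "D (\<lambda>\<omega>. X \<omega> + m) = D X" unfolding D_def .
  next
    show "D (\<lambda>_. 0) = 0" unfolding D_def using P2 Rinf_zero[OF ne] by linarith
  next
    fix X assume X: "X \<in> C"
    then have XB: "X \<in> Bb M" using assms(1) by blast
    define Y where "Y = (\<lambda>\<omega>. X \<omega> + - Rinf M X)"
    have YC: "Y \<in> C" unfolding Y_def using assms(3)[OF X] .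
    have "le_on M (\<lambda>_. 0) Y" unfolding le_on_def
    proof
      fix w assume w: "w \<in> space M"
      have "(INF \<omega>\<in>space M. X \<omega>) \<le> X w"
        using cINF_lower[OF bdd_below_img[OF XB] w] .
      then show "0 \<le> Y w" unfolding Y_def Rinf_def by linarith
    qed
    then have "H Y \<ge> 0" using P3[OF YC] by blast
    moreover have "H Y = H X + - Rinf M X" unfolding Y_def using P1[OF X] .
    ultimately show "D X \<ge> 0" unfolding D_def by linarith
  qed
  moreover have "\<forall>X\<in>C. H X = Rinf M X + D X" unfolding D_def by simp
  ultimately show "\<exists>R D. risk_measure M R \<and> deviation_measure M C D \<and> (\<forall>X\<in>C. H X = R X + D X)"
    using Rinf_risk[OF ne] by blast
next
  assume "\<exists>R D. risk_measure M R \<and> deviation_measure M C D \<and> (\<forall>X\<in>C. H X = R X + D X)"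
  then obtain R D where R: "risk_measure M R" and D: "deviation_measure M C D"
    and HRD: "\<And>X. X \<in> C \<Longrightarrow> H X = R X + D X" by blast
  have R1: "\<And>X m. X \<in> Bb M \<Longrightarrow> R (\<lambda>\<omega>. X \<omega> + m) = R X + m"
    and R2: "R (\<lambda>_. 0) = 0"
    and R3: "\<And>X Y. X \<in> Bb M \<Longrightarrow> Y \<in> Bb M \<Longrightarrow> le_on M X Y \<Longrightarrow> R X \<le> R Y"
    using R unfolding risk_measure_def by blast+
  have D1: "\<And>X m. X \<in> C \<Longrightarrow> D (\<lambda>\<omega>. X \<omega> + m) = D X"
    and D2: "D (\<lambda>_. 0) = 0" and D3: "\<And>X. X \<in> C \<Longrightarrow> D X \<ge> 0"
    using D unfolding deviation_measure_def by blast+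
  have z: "(\<lambda>_. 0) \<in> Bb M" using assms(1,2) by blast
  show "premium_principle M C H"
    unfolding premium_principle_def
  proof (intro conjI ballI allI impI)
    fix X m assume X: "X \<in> C"
    then have XB: "X \<in> Bb M" using assms(1) by blast
    show "H (\<lambda>\<omega>. X \<omega> + m) = H X + m"
      using HRD[OF assms(3)[OF X, of m]] HRD[OF X] R1[OF XB, of m] D1[OF X, of m] by linarith
  next
    show "H (\<lambda>_. 0) = 0" using HRD[OF assms(2)] R2 D2 by linarith
  next
    fix X assume X: "X \<in> C" and le: "le_on M (\<lambda>_. 0) X"
    then have XB: "X \<in> Bb M" using assms(1) by blast
    have "R X \<ge> 0" using R3[OF z XB le] R2 by linarith
    then show "H X \<ge> 0" using D3[OF X] HRD[OF X] by linarith
  qed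
qed

end
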